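(* Let $d\ge3$, $h\ge1$, and let $\ell$ be a leaf (a vertex at distance $h$ from the root). Then the exponent of $G(d,h)$ equals the order of $\bar{\mathbf{x}}_\ell$ in $G(d,h)$.
   Context: Let $\mathcal{T}(d,h)$ be the rooted tree in which the root $0$ has $d$ children, every vertex at distance $1,\dots,h-1$ from the root has $d-1$ children, and the vertices at distance $h$ are leaves. Let $V$ be its vertex set, $A$ its adjacency matrix, $\Delta := dI-A$, and $\Lambda\subset\mathbb{Z}^V$ the lattice spanned by the rows of $\Delta$. Then $G(d,h):=\mathbb{Z}^V/\Lambda$; $\{\mathbf{x}_i:i\in V\}$ is the standard basis of $\mathbb{Z}^V$ and $\bar{\mathbf{v}}$ denotes the image of $\mathbf{v}$ in $G(d,h)$. The exponent is the least common multiple of the orders of the elements. *)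

theory Defs
  imports Main
begin

text \<open>Vertices of T(d,h) are encoded as paths from the root: the root is [],
  the children of the root are [i] with i < d, and the children of a non-root
  vertex xs at distance < h are xs @ [j] with j < d - 1.  The distance of a
  vertex from the root is the length of its list.\<close>

definition tree_V :: "nat \<Rightarrow> nat \<Rightarrow> nat list set" where
  "tree_V d h = {xs. length xs \<le> h \<and> (xs \<noteq> [] \<longrightarrow> hd xs < d) \<and> (\<forall>i\<in>set (tl xs). i < d - 1)}"

definition tree_adj :: "nat list \<Rightarrow> nat list \<Rightarrow> bool" where
  "tree_adj x y \<longleftrightarrow> (\<exists>j. y = x @ [j]) \<or> (\<exists>j. x = y @ [j])"

definition ZV :: "nat \<Rightarrow> nat \<Rightarrow> (nat list \<Rightarrow> int) set" where
  "ZV d h = {v. \<forall>j. j \<notin> tree_V d h \<longrightarrow> v j = 0}"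

definition lap_row :: "nat \<Rightarrow> nat \<Rightarrow> nat list \<Rightarrow> nat list \<Rightarrow> int" where
  "lap_row d h i = (\<lambda>j. if j \<in> tree_V d h then
      int d * (if i = j then 1 else 0) - (if tree_adj i j then 1 else 0) else 0)"

definition lap_lattice :: "nat \<Rightarrow> nat \<Rightarrow> (nat list \<Rightarrow> int) set" where
  "lap_lattice d h = {v. \<exists>c :: nat list \<Rightarrow> int.
      v = (\<lambda>j. \<Sum>i\<in>tree_V d h. c i * lap_row d h i j)}"

definition std_basis :: "nat list \<Rightarrow> nat list \<Rightarrow> int" where
  "std_basis i = (\<lambda>j. if j = i then 1 else 0)"

text \<open>Order of the image of v in G(d,h) = Z^V / Lambda (0 if infinite).\<close>
definition elem_order :: "nat \<Rightarrow> nat \<Rightarrow> (nat list \<Rightarrow> int) \<Rightarrow> nat" where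
  "elem_order d h v = (if \<exists>n>0. (\<lambda>j. int n * v j) \<in> lap_lattice d h
     then (LEAST n. n > 0 \<and> (\<lambda>j. int n * v j) \<in> lap_lattice d h) else 0)"

definition group_exponent :: "nat \<Rightarrow> nat \<Rightarrow> nat" where
  "group_exponent d h = Lcm (elem_order d h ` ZV d h)"

end

theory Submission
  imports Defs
begin

lemma V_nth: "xs \<in> tree_V d h \<longleftrightarrow>
  length xs \<le> h \<and> (\<forall>k<length xs. xs!k < (if k = 0 then d else d - 1))"
proof (cases xs)
  case Nil then show ?thesis by (simp add: tree_V_def)
next
  case (Cons a ys)
  have "(\<forall>i\<in>set ys. i < d - 1) \<longleftrightarrow> (\<forall>k<length ys. ys!k < d - 1)"
    by (simp add: all_set_conv_all_nth)
  moreover have "(\<forall>k<length (a#ys). (a#ys)!k < (if k = 0 then d else d - 1))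
      \<longleftrightarrow> a < d \<and> (\<forall>k<length ys. ys!k < d - 1)"
    by (auto simp: nth_Cons split: nat.splits)
  ultimately show ?thesis using Cons by (auto simp: tree_V_def)
qed

lemma V_finite: "finite (tree_V d h)"
proof -
  have "tree_V d h \<subseteq> {xs. set xs \<subseteq> {..<d} \<and> length xs \<le> h}"
  proof
    fix xs assume a: "xs \<in> tree_V d h"
    have "xs!i < d" if "i < length xs" for i
      using a that unfolding V_nth by (cases "i = 0") force+
    then show "xs \<in> {xs. set xs \<subseteq> {..<d} \<and> length xs \<le> h}"
      using a by (auto simp: V_nth in_set_conv_nth)
  qed
  moreover have "finite {xs. set xs \<subseteq> {..<d} \<and> length xs \<le> h}"
    by (rule finite_lists_length_le) simp
  ultimately show ?thesis by (rule finite_subset)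
qed

lemma lat_zero: "(\<lambda>j. 0) \<in> lap_lattice d h"
  unfolding lap_lattice_def by (rule CollectI, rule exI[of _ "\<lambda>_. 0"]) simp

lemma lat_add: "u \<in> lap_lattice d h \<Longrightarrow> w \<in> lap_lattice d h \<Longrightarrow>
   (\<lambda>j. u j + w j) \<in> lap_lattice d h"
  unfolding lap_lattice_def
proof (clarify)
  fix c c'
  show "\<exists>c''. (\<lambda>j. (\<Sum>i\<in>tree_V d h. c i * lap_row d h i j) + (\<Sum>i\<in>tree_V d h. c' i * lap_row d h i j))
     = (\<lambda>j. \<Sum>i\<in>tree_V d h. c'' i * lap_row d h i j)"
    by (rule exI[of _ "\<lambda>i. c i + c' i"]) (simp add: sum.distrib algebra_simps)
qed

lemma lat_smult: "u \<in> lap_lattice d h \<Longrightarrow> (\<lambda>j. k * u j) \<in> lap_lattice d h"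
  unfolding lap_lattice_def
proof (clarify)
  fix c
  show "\<exists>c''. (\<lambda>j. k * (\<Sum>i\<in>tree_V d h. c i * lap_row d h i j))
     = (\<lambda>j. \<Sum>i\<in>tree_V d h. c'' i * lap_row d h i j)"
    by (rule exI[of _ "\<lambda>i. k * c i"]) (simp add: sum_distrib_left algebra_simps)
qed

lemma lat_sum: "finite S \<Longrightarrow> (\<forall>i\<in>S. f i \<in> lap_lattice d h) \<Longrightarrow>
   (\<lambda>j. \<Sum>i\<in>S. a i * f i j) \<in> lap_lattice d h"
proof (induction S rule: finite_induct)
  case empty then show ?case using lat_zero by simp
next
  case (insert x F)
  have "(\<lambda>j. a x * f x j + (\<Sum>i\<in>F. a i * f i j)) \<in> lap_lattice d h"
    using insert by (intro lat_add lat_smult) auto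
  then show ?case using insert by simp
qed

lemma lat_row: "i \<in> tree_V d h \<Longrightarrow> lap_row d h i \<in> lap_lattice d h"
  unfolding lap_lattice_def
proof (rule CollectI, rule exI[of _ "\<lambda>x. if x = i then 1 else 0"], rule ext)
  fix j assume "i \<in> tree_V d h"
  have "(\<Sum>ia\<in>tree_V d h. (if ia = i then 1 else 0) * lap_row d h ia j)
     = (\<Sum>ia\<in>tree_V d h. (if ia = i then lap_row d h i j else 0))"
    by (rule sum.cong) auto
  also have "\<dots> = lap_row d h i j" using \<open>i \<in> tree_V d h\<close> by (simp add: V_finite)
  finally show "lap_row d h i j = (\<Sum>ia\<in>tree_V d h. (if ia = i then 1 else 0) * lap_row d h ia j)"
    by simp
qed


definition sw :: "nat \<Rightarrow> nat \<Rightarrow> nat \<Rightarrow> nat" where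
  "sw a b x = (if x = a then b else if x = b then a else x)"

lemma sw_sw[simp]: "sw a b (sw a b x) = x"
  by (simp add: sw_def)

lemma sw_bound: "x < B \<Longrightarrow> a < B \<Longrightarrow> b < B \<Longrightarrow> sw a b x < B"
  by (simp add: sw_def)

definition sg :: "nat list \<Rightarrow> nat list \<Rightarrow> nat list \<Rightarrow> nat list" where
  "sg l l' xs = map (\<lambda>(k,x). sw (l!k) (l'!k) x) (zip [0..<length xs] xs)"

lemma sg_length[simp]: "length (sg l l' xs) = length xs"
  by (simp add: sg_def)

lemma sg_nth: "k < length xs \<Longrightarrow> sg l l' xs ! k = sw (l!k) (l'!k) (xs!k)"
  by (simp add: sg_def)

lemma sg_sg[simp]: "sg l l' (sg l l' xs) = xs"
  by (rule nth_equalityI) (auto simp: sg_nth)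

lemma sg_snoc: "sg l l' (xs @ [j]) = sg l l' xs @ [sw (l!length xs) (l'!length xs) j]"
  by (rule nth_equalityI) (auto simp: sg_nth nth_append less_Suc_eq)

lemma sg_l: "length l = length l' \<Longrightarrow> sg l l' l = l'"
  by (rule nth_equalityI) (auto simp: sg_nth sw_def)

lemma sg_inj: "inj (sg l l')"
  by (metis injI sg_sg)

lemma sg_adj1: "tree_adj x y \<Longrightarrow> tree_adj (sg l l' x) (sg l l' y)"
  unfolding tree_adj_def by (auto simp: sg_snoc)

lemma sg_adj: "tree_adj (sg l l' x) (sg l l' y) \<longleftrightarrow> tree_adj x y"
  by (metis sg_adj1 sg_sg)

lemma sg_V1:
  assumes "l \<in> tree_V d h" "l' \<in> tree_V d h" "length l = h" "length l' = h"
    and "xs \<in> tree_V d h"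
  shows "sg l l' xs \<in> tree_V d h"
  unfolding V_nth
proof (intro conjI allI impI)
  show "length (sg l l' xs) \<le> h" using assms(5) by (simp add: V_nth)
  fix k assume k: "k < length (sg l l' xs)"
  then have k2: "k < length xs" "k < length l" "k < length l'" using assms(3,4,5) by (auto simp: V_nth)
  show "sg l l' xs ! k < (if k = 0 then d else d - 1)"
  proof -
    have a: "xs!k < (if k=0 then d else d-1)" using assms(5) k2 unfolding V_nth by blast
    have b: "l!k < (if k=0 then d else d-1)" using assms(1) k2 unfolding V_nth by blast
    have c: "l'!k < (if k=0 then d else d-1)" using assms(2) k2 unfolding V_nth by blast
    have "sw (l!k) (l'!k) (xs!k) < (if k=0 then d else d-1)"
      using a b c sw_bound by blast
    then show ?thesis using k2 by (simp only: sg_nth)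
  qed
qed

lemma sg_V:
  assumes "l \<in> tree_V d h" "l' \<in> tree_V d h" "length l = h" "length l' = h"
  shows "sg l l' xs \<in> tree_V d h \<longleftrightarrow> xs \<in> tree_V d h"
  using sg_V1[OF assms] by (metis sg_sg)

lemma sg_lattice:
  assumes "l \<in> tree_V d h" "l' \<in> tree_V d h" "length l = h" "length l' = h"
    and "v \<in> lap_lattice d h"
  shows "(\<lambda>j. v (sg l l' j)) \<in> lap_lattice d h"
proof -
  let ?s = "sg l l'"
  obtain c where c: "v = (\<lambda>j. \<Sum>i\<in>tree_V d h. c i * lap_row d h i j)"
    using assms(5) unfolding lap_lattice_def by blast
  have row: "lap_row d h i (?s j) = lap_row d h (?s i) j" for i j
  proof -
    have eq: "(i = ?s j) = (?s i = j)" by (metis sg_sg)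
    have adj: "tree_adj i (?s j) = tree_adj (?s i) j" by (metis sg_adj sg_sg)
    have V: "(?s j \<in> tree_V d h) = (j \<in> tree_V d h)" by (rule sg_V[OF assms(1-4)])
    show ?thesis unfolding lap_row_def eq adj V ..
  qed
  have img: "?s ` tree_V d h = tree_V d h"
  proof
    show "?s ` tree_V d h \<subseteq> tree_V d h" using sg_V[OF assms(1-4)] by auto
    show "tree_V d h \<subseteq> ?s ` tree_V d h"
    proof
      fix x assume "x \<in> tree_V d h"
      then have "?s x \<in> tree_V d h" using sg_V[OF assms(1-4)] by simp
      then show "x \<in> ?s ` tree_V d h" by (metis image_eqI sg_sg)
    qed
  qed
  have "(\<lambda>j. v (?s j)) = (\<lambda>j. \<Sum>i\<in>tree_V d h. c i * lap_row d h (?s i) j)"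
    by (simp add: c row)
  also have "\<dots> = (\<lambda>j. \<Sum>i\<in>?s ` tree_V d h. c (?s i) * lap_row d h i j)"
  proof (rule ext)
    fix j
    have inj: "inj_on ?s (tree_V d h)" by (metis inj_on_def sg_sg)
    show "(\<Sum>i\<in>tree_V d h. c i * lap_row d h (?s i) j) = (\<Sum>i\<in>?s ` tree_V d h. c (?s i) * lap_row d h i j)"
      using sum.reindex[OF inj, of "\<lambda>i. c (?s i) * lap_row d h i j"] by (simp add: o_def)
  qed
  also have "\<dots> = (\<lambda>j. \<Sum>i\<in>tree_V d h. c (?s i) * lap_row d h i j)"
    by (simp add: img)
  finally show ?thesis unfolding lap_lattice_def mem_Collect_eq by (rule exI[of _ "\<lambda>i. c (?s i)"])
qed

lemma leaf_sym:
  assumes "l \<in> tree_V d h" "l' \<in> tree_V d h" "length l = h" "length l' = h"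
    and "(\<lambda>j. int N * std_basis l j) \<in> lap_lattice d h"
  shows "(\<lambda>j. int N * std_basis l' j) \<in> lap_lattice d h"
proof -
  have "(\<lambda>j. int N * std_basis l (sg l l' j)) = (\<lambda>j. int N * std_basis l' j)"
  proof -
    have "(sg l l' j = l) = (j = l')" for j using sg_l[of l l'] assms(3,4) by (metis sg_sg)
    then show ?thesis unfolding std_basis_def by simp
  qed
  moreover have "(\<lambda>j. int N * std_basis l (sg l l' j)) \<in> lap_lattice d h"
    using sg_lattice[OF assms(1-4) assms(5)] .
  ultimately show ?thesis by simp
qed


lemma row_ident:
  assumes "i \<in> tree_V d h"
  shows "lap_row d h i j = int d * std_basis i j -
     (\<Sum>y\<in>tree_V d h. if tree_adj i y then std_basis y j else 0)"
proof (cases "j \<in> tree_V d h")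
  case True
  have "(\<Sum>y\<in>tree_V d h. if tree_adj i y then std_basis y j else 0)
      = (\<Sum>y\<in>tree_V d h. if y = j then (if tree_adj i j then 1 else 0) else 0)"
    by (rule sum.cong) (auto simp: std_basis_def)
  also have "\<dots> = (if tree_adj i j then 1 else 0)" using True by (simp add: V_finite)
  finally show ?thesis using True by (simp add: lap_row_def std_basis_def eq_commute)
next
  case False
  have "(\<Sum>y\<in>tree_V d h. if tree_adj i y then std_basis y j else 0) = 0"
    by (rule sum.neutral) (use False in \<open>auto simp: std_basis_def\<close>)
  moreover have "std_basis i j = 0" using False assms by (auto simp: std_basis_def)
  ultimately show ?thesis using False by (simp add: lap_row_def)
qed

lemma all_vertices:
  assumes leaves: "\<And>l'. l' \<in> tree_V d h \<Longrightarrow> length l' = h \<Longrightarrow>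
      (\<lambda>j. int N * std_basis l' j) \<in> lap_lattice d h"
    and d2: "d \<ge> 2"
  shows "\<forall>x\<in>tree_V d h. h - length x \<le> n \<longrightarrow> (\<lambda>j. int N * std_basis x j) \<in> lap_lattice d h"
proof (induction n)
  case 0
  show ?case
  proof (intro ballI impI)
    fix x assume x: "x \<in> tree_V d h" "h - length x \<le> 0"
    then have "length x = h" by (auto simp: V_nth)
    then show "(\<lambda>j. int N * std_basis x j) \<in> lap_lattice d h" using leaves x by blast
  qed
next
  case (Suc n)
  show ?case
  proof (intro ballI impI)
    fix x assume x: "x \<in> tree_V d h" "h - length x \<le> Suc n"
    show "(\<lambda>j. int N * std_basis x j) \<in> lap_lattice d h"
    proof (cases "h - length x \<le> n")
      case True then show ?thesis using Suc.IH x by blast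
    next
      case False
      then have len: "h - length x = Suc n" "length x < h" using x by auto
      define i where "i = x @ [0]"
      have iV: "i \<in> tree_V d h"
        unfolding V_nth i_def
      proof (intro conjI allI impI)
        show "length (x @ [0]) \<le> h" using len by simp
        fix k assume k: "k < length (x @ [0])"
        show "(x @ [0]) ! k < (if k = 0 then d else d - 1)"
        proof (cases "k < length x")
          case True then show ?thesis using x(1) unfolding V_nth by (simp add: nth_append)
        next
          case False then show ?thesis using k d2 by (simp add: nth_append)
        qed
      qed
      have Ni: "(\<lambda>j. int N * std_basis i j) \<in> lap_lattice d h"
        using Suc.IH iV len by (auto simp: i_def)
      define f where "f y = (\<lambda>j. if tree_adj i y then int N * std_basis y j else 0)" for y
      have fL: "\<forall>y\<in>tree_V d h - {x}. f y \<in> lap_lattice d h"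
      proof
        fix y assume y: "y \<in> tree_V d h - {x}"
        show "f y \<in> lap_lattice d h"
        proof (cases "tree_adj i y")
          case False then show ?thesis using lat_zero by (simp add: f_def)
        next
          case True
          then have "\<exists>c. y = i @ [c]" using y unfolding tree_adj_def i_def by auto
          then have "h - length y \<le> n" using len by (auto simp: i_def)
          then show ?thesis using Suc.IH y True by (simp add: f_def)
        qed
      qed
      have adjx: "tree_adj i x" by (simp add: tree_adj_def i_def)
      have key: "int N * std_basis x j = int d * (int N * std_basis i j)
          + (-1) * (\<Sum>y\<in>tree_V d h - {x}. 1 * f y j) + (- int N) * lap_row d h i j" for j
      proof -
        have "(\<Sum>y\<in>tree_V d h. if tree_adj i y then std_basis y j else 0)
           = std_basis x j + (\<Sum>y\<in>tree_V d h - {x}. if tree_adj i y then std_basis y j else 0)"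
          using x(1) adjx by (simp add: sum.remove[OF V_finite])
        moreover have "(\<Sum>y\<in>tree_V d h - {x}. 1 * f y j)
           = int N * (\<Sum>y\<in>tree_V d h - {x}. if tree_adj i y then std_basis y j else 0)"
          by (simp add: f_def sum_distrib_left if_distrib cong: if_cong)
        ultimately have e: "std_basis x j = int d * std_basis i j - lap_row d h i j
            - (\<Sum>y\<in>tree_V d h - {x}. if tree_adj i y then std_basis y j else 0)"
          and M: "(\<Sum>y\<in>tree_V d h - {x}. 1 * f y j)
           = int N * (\<Sum>y\<in>tree_V d h - {x}. if tree_adj i y then std_basis y j else 0)"
          using row_ident[OF iV, of j] by linarith+
        show ?thesis by (simp only: e M) (simp add: algebra_simps)
      qed
      have "(\<lambda>j. int d * (int N * std_basis i j)
          + (-1) * (\<Sum>y\<in>tree_V d h - {x}. 1 * f y j) + (- int N) * lap_row d h i j) \<in> lap_lattice d h"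
        by (intro lat_add lat_smult Ni lat_sum fL lat_row iV) (simp add: V_finite)
      then show ?thesis using key by simp
    qed
  qed
qed

lemma order_dvd:
  assumes "N > 0" "(\<lambda>j. int N * v j) \<in> lap_lattice d h"
  shows "elem_order d h v dvd N"
proof -
  let ?P = "\<lambda>n. n > 0 \<and> (\<lambda>j. int n * v j) \<in> lap_lattice d h"
  have ex: "\<exists>n>0. (\<lambda>j. int n * v j) \<in> lap_lattice d h" using assms by blast
  define m where "m = (LEAST n. ?P n)"
  have em: "elem_order d h v = m" using ex by (simp add: elem_order_def m_def)
  have Pm: "?P m" unfolding m_def by (rule LeastI_ex) (use ex in blast)
  have "N mod m = 0"
  proof (rule ccontr)
    assume ne: "N mod m \<noteq> 0"
    have eqN: "int N = int (N div m) * int m + int (N mod m)"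
      by (metis of_nat_add of_nat_mult div_mult_mod_eq)
    have "(\<lambda>j. int N * v j + (- int (N div m)) * (int m * v j)) \<in> lap_lattice d h"
      using lat_add[OF assms(2) lat_smult[of "\<lambda>j. int m * v j" d h "- int (N div m)"]] Pm by simp
    moreover have "(\<lambda>j. int N * v j + (- int (N div m)) * (int m * v j)) = (\<lambda>j. int (N mod m) * v j)"
      using eqN by (auto simp: algebra_simps)
    ultimately have "?P (N mod m)" using ne by simp
    then have "m \<le> N mod m" unfolding m_def by (rule Least_le)
    moreover have "N mod m < m" using Pm by simp
    ultimately show False by simp
  qed
  then show ?thesis using em by (simp add: mod_eq_0_iff_dvd)
qed

theorem lemma7p4:
  fixes d h :: nat and l :: "nat list"
  assumes "d \<ge> 3" and "h \<ge> 1"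
    and "l \<in> tree_V d h" and "length l = h"
  shows "group_exponent d h = elem_order d h (std_basis l)"
proof -
  let ?N = "elem_order d h (std_basis l)"
  have lZ: "std_basis l \<in> ZV d h" using assms(3) by (auto simp: ZV_def std_basis_def)
  then have Nin: "?N \<in> elem_order d h ` ZV d h" by blast
  show ?thesis
  proof (cases "?N = 0")
    case True
    have "0 dvd group_exponent d h" unfolding group_exponent_def using Nin True
      by (metis dvd_Lcm)
    then show ?thesis using True by simp
  next
    case False
    then have ex: "\<exists>n>0. (\<lambda>j. int n * std_basis l j) \<in> lap_lattice d h"
      by (auto simp: elem_order_def split: if_splits)
    then have "?N = (LEAST n. n > 0 \<and> (\<lambda>j. int n * std_basis l j) \<in> lap_lattice d h)"
      by (simp add: elem_order_def)
    moreover have "(LEAST n. n > 0 \<and> (\<lambda>j. int n * std_basis l j) \<in> lap_lattice d h) > 0 \<and>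
        (\<lambda>j. int (LEAST n. n > 0 \<and> (\<lambda>j. int n * std_basis l j) \<in> lap_lattice d h) * std_basis l j)
          \<in> lap_lattice d h"
      by (rule LeastI_ex) (use ex in blast)
    ultimately have Nl: "(\<lambda>j. int ?N * std_basis l j) \<in> lap_lattice d h" by simp
    have leaves: "(\<lambda>j. int ?N * std_basis l' j) \<in> lap_lattice d h"
      if "l' \<in> tree_V d h" "length l' = h" for l'
      using leaf_sym[OF assms(3) that(1) assms(4) that(2) Nl] .
    have allv: "(\<lambda>j. int ?N * std_basis x j) \<in> lap_lattice d h" if "x \<in> tree_V d h" for x
      using all_vertices[of d h ?N h, OF leaves] assms(1) that by auto
    have dv: "k dvd ?N" if kin: "k \<in> elem_order d h ` ZV d h" for k
    proof -
      obtain v where v: "v \<in> ZV d h" "k = elem_order d h v" using kin by blast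
      have "(\<lambda>j. int ?N * v j) = (\<lambda>j. \<Sum>i\<in>tree_V d h. v i * (int ?N * std_basis i j))"
      proof (rule ext)
        fix j
        have "(\<Sum>i\<in>tree_V d h. v i * (int ?N * std_basis i j))
            = (\<Sum>i\<in>tree_V d h. if i = j then v j * int ?N else 0)"
          by (rule sum.cong) (auto simp: std_basis_def)
        also have "\<dots> = int ?N * v j" using v(1) by (simp add: V_finite ZV_def)
        finally show "int ?N * v j = (\<Sum>i\<in>tree_V d h. v i * (int ?N * std_basis i j))" by simp
      qed
      moreover have "(\<lambda>j. \<Sum>i\<in>tree_V d h. v i * (int ?N * std_basis i j)) \<in> lap_lattice d h"
        by (rule lat_sum) (auto simp: V_finite allv)
      ultimately show ?thesis using order_dvd[of ?N v d h] False v(2) by simp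
    qed
    have "group_exponent d h dvd ?N" unfolding group_exponent_def
      by (rule Lcm_least) (use dv in blast)
    moreover have "?N dvd group_exponent d h" unfolding group_exponent_def
      using Nin by (rule dvd_Lcm)
    ultimately show ?thesis by (rule dvd_antisym)
  qed
qed

end
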